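(* Let $\mathbb{M}$ be a monster model of $T_{\mathrm{Ham}}$ with underlying set $G_\infty$, and let $I=I_1+(c)+I_2$ be an ordered index set with $I_1,I_2$ infinite. Let $(a_i)_{i\in I}$ be a nonconstant indiscernible sequence from $G$, and let $(b,b')\in G\times v(G)$ be such that $(a_i)_{i\in I_1+I_2}$ is $bb'$-indiscernible. If $v(a_i-b)=b'$ for all $i\neq c$, then $v(a_c-b)=b'$.
   Context: Let $C$ be an ordered field. A Hamel space over $C$ is a $C$-vector space $G$ with two total orderings $<_0,<_1$, each making $G$ an ordered $C$-vector space, and a map $v:G\to G_\infty=G\cup\{\infty\}$ ($G<_0\infty$, $G<_1\infty$) such that for all $x,y\in G$, $\lambda\in C^{\times}$: $v(x)=\infty$ iff $x=0$; $v(x+y)\ge_0\min_0(v(x),v(y))$; $v(\lambda x)=v(x)$; $0<_1x<_1y\Rightarrow v(x)\ge_0v(y)$; $v(v(x))=v(x)$ (with $v(\infty)=\infty$); $v(x)>_10$. It is independent if for all $a_0<_0b_0$, $a_1<_1b_1$ in $G\cup\{\pm\infty\}$ some $z\in G$ has $a_0<_0z<_0b_0$, $a_1<_1z<_1b_1$; dense if for all $a<_0b$ in $G$ some $c$ has $a<_0v(c)<_0b$. $T_{\mathrm{Ham}}$ is the complete theory in the language $\{0,+,(\lambda_c)_{c\in C},<_0,<_1,v,\infty\}$ on universe $G_\infty$ (with $\infty$ absorbing for $+$, $\lambda_c$, $v$) whose models are exactly the independent dense Hamel spaces over $C$. Indiscernible means $\emptyset$-indiscernible; $bb'$-indiscernible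 means indiscernible over $\{b,b'\}$. *)

theory Defs
  imports Complex_Main
begin

text \<open>A Hamel-space signature over an ordered field 'c on a group 'g.
  The extended universe G_infinity is modelled as 'g option, with None = infinity.\<close>

record ('c, 'g) hstruct =
  smul :: "'c \<Rightarrow> 'g \<Rightarrow> 'g"
  lt0  :: "'g \<Rightarrow> 'g \<Rightarrow> bool"
  lt1  :: "'g \<Rightarrow> 'g \<Rightarrow> bool"
  val  :: "'g \<Rightarrow> 'g option"

definition ext_lt :: "('g \<Rightarrow> 'g \<Rightarrow> bool) \<Rightarrow> 'g option \<Rightarrow> 'g option \<Rightarrow> bool" where
  "ext_lt lt x y = (case (x, y) of
      (Some a, Some b) \<Rightarrow> lt a b
    | (Some _, None) \<Rightarrow> True
    | _ \<Rightarrow> False)"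

definition ext_le :: "('g \<Rightarrow> 'g \<Rightarrow> bool) \<Rightarrow> 'g option \<Rightarrow> 'g option \<Rightarrow> bool" where
  "ext_le lt x y = (ext_lt lt x y \<or> x = y)"

definition ext_min :: "('g \<Rightarrow> 'g \<Rightarrow> bool) \<Rightarrow> 'g option \<Rightarrow> 'g option \<Rightarrow> 'g option" where
  "ext_min lt x y = (if ext_le lt x y then x else y)"

definition strict_total :: "('g \<Rightarrow> 'g \<Rightarrow> bool) \<Rightarrow> bool" where
  "strict_total lt = ((\<forall>x. \<not> lt x x) \<and> (\<forall>x y z. lt x y \<longrightarrow> lt y z \<longrightarrow> lt x z)
                       \<and> (\<forall>x y. lt x y \<or> x = y \<or> lt y x))"

definition ordered_vs :: "('c::linordered_field \<Rightarrow> 'g::ab_group_add \<Rightarrow> 'g) \<Rightarrow> ('g \<Rightarrow> 'g \<Rightarrow> bool) \<Rightarrow> bool" where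
  "ordered_vs sm lt = (strict_total lt
     \<and> (\<forall>x y z. lt x y \<longrightarrow> lt (x + z) (y + z))
     \<and> (\<forall>c x y. 0 < c \<longrightarrow> lt x y \<longrightarrow> lt (sm c x) (sm c y)))"

definition hamel_space :: "('c::linordered_field, 'g::ab_group_add) hstruct \<Rightarrow> bool" where
  "hamel_space H = (vector_space (smul H)
     \<and> ordered_vs (smul H) (lt0 H) \<and> ordered_vs (smul H) (lt1 H)
     \<and> (\<forall>x. val H x = None \<longleftrightarrow> x = 0)
     \<and> (\<forall>x y. ext_le (lt0 H) (ext_min (lt0 H) (val H x) (val H y)) (val H (x + y)))
     \<and> (\<forall>c x. c \<noteq> 0 \<longrightarrow> val H (smul H c x) = val H x)
     \<and> (\<forall>x y. lt1 H 0 x \<longrightarrow> lt1 H x y \<longrightarrow> ext_le (lt0 H) (val H y) (val H x))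
     \<and> (\<forall>x. (case val H x of None \<Rightarrow> True | Some y \<Rightarrow> val H y = Some y))
     \<and> (\<forall>x. ext_lt (lt1 H) (Some 0) (val H x)))"

text \<open>Bounds in G with -infinity / +infinity: None stands for the infinite bound.\<close>
definition above :: "('g \<Rightarrow> 'g \<Rightarrow> bool) \<Rightarrow> 'g option \<Rightarrow> 'g \<Rightarrow> bool" where
  "above lt a z = (case a of None \<Rightarrow> True | Some a' \<Rightarrow> lt a' z)"
definition below :: "('g \<Rightarrow> 'g \<Rightarrow> bool) \<Rightarrow> 'g \<Rightarrow> 'g option \<Rightarrow> bool" where
  "below lt z b = (case b of None \<Rightarrow> True | Some b' \<Rightarrow> lt z b')"
definition bounds_ok :: "('g \<Rightarrow> 'g \<Rightarrow> bool) \<Rightarrow> 'g option \<Rightarrow> 'g option \<Rightarrow> bool" where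
  "bounds_ok lt a b = (case (a, b) of (Some a', Some b') \<Rightarrow> lt a' b' | _ \<Rightarrow> True)"

definition independent :: "('c, 'g) hstruct \<Rightarrow> bool" where
  "independent H = (\<forall>a0 b0 a1 b1. bounds_ok (lt0 H) a0 b0 \<longrightarrow> bounds_ok (lt1 H) a1 b1 \<longrightarrow>
      (\<exists>z. above (lt0 H) a0 z \<and> below (lt0 H) z b0 \<and> above (lt1 H) a1 z \<and> below (lt1 H) z b1))"

definition dense :: "('c, 'g) hstruct \<Rightarrow> bool" where
  "dense H = (\<forall>a b. lt0 H a b \<longrightarrow>
      (\<exists>c. ext_lt (lt0 H) (Some a) (val H c) \<and> ext_lt (lt0 H) (val H c) (Some b)))"

definition model_Tham :: "('c::linordered_field, 'g::ab_group_add) hstruct \<Rightarrow> bool" where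
  "model_Tham H = (hamel_space H \<and> independent H \<and> dense H)"

datatype ('c, 'g) trm =
    Var nat | Zero | Infty | Plus "('c, 'g) trm" "('c, 'g) trm"
  | Scal 'c "('c, 'g) trm" | Vt "('c, 'g) trm" | Par "'g option"

datatype ('c, 'g) fml =
    Eq "('c, 'g) trm" "('c, 'g) trm" | Less0 "('c, 'g) trm" "('c, 'g) trm"
  | Less1 "('c, 'g) trm" "('c, 'g) trm"
  | Neg "('c, 'g) fml" | Conj "('c, 'g) fml" "('c, 'g) fml" | Ex nat "('c, 'g) fml"

primrec tparams :: "('c, 'g) trm \<Rightarrow> 'g option set" where
  "tparams (Var k) = {}" | "tparams Zero = {}" | "tparams Infty = {}"
| "tparams (Plus s t) = tparams s \<union> tparams t" | "tparams (Scal c t) = tparams t"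
| "tparams (Vt t) = tparams t" | "tparams (Par p) = {p}"

primrec params :: "('c, 'g) fml \<Rightarrow> 'g option set" where
  "params (Eq s t) = tparams s \<union> tparams t" | "params (Less0 s t) = tparams s \<union> tparams t"
| "params (Less1 s t) = tparams s \<union> tparams t" | "params (Neg f) = params f"
| "params (Conj f g) = params f \<union> params g" | "params (Ex k f) = params f"

primrec teval :: "('c, 'g::ab_group_add) hstruct \<Rightarrow> (nat \<Rightarrow> 'g option) \<Rightarrow> ('c, 'g) trm \<Rightarrow> 'g option" where
  "teval H e (Var k) = e k" | "teval H e Zero = Some 0" | "teval H e Infty = None"
| "teval H e (Plus s t) = (case (teval H e s, teval H e t) of (Some x, Some y) \<Rightarrow> Some (x + y) | _ \<Rightarrow> None)"
| "teval H e (Scal c t) = map_option (smul H c) (teval H e t)"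
| "teval H e (Vt t) = (case teval H e t of None \<Rightarrow> None | Some x \<Rightarrow> val H x)"
| "teval H e (Par p) = p"

primrec sat :: "('c, 'g::ab_group_add) hstruct \<Rightarrow> (nat \<Rightarrow> 'g option) \<Rightarrow> ('c, 'g) fml \<Rightarrow> bool" where
  "sat H e (Eq s t) = (teval H e s = teval H e t)"
| "sat H e (Less0 s t) = ext_lt (lt0 H) (teval H e s) (teval H e t)"
| "sat H e (Less1 s t) = ext_lt (lt1 H) (teval H e s) (teval H e t)"
| "sat H e (Neg f) = (\<not> sat H e f)"
| "sat H e (Conj f g) = (sat H e f \<and> sat H e g)"
| "sat H e (Ex k f) = (\<exists>x. sat H (e(k := x)) f)"

definition tup :: "('i \<Rightarrow> 'g) \<Rightarrow> 'i list \<Rightarrow> nat \<Rightarrow> 'g option" where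
  "tup a is k = (if k < length is then Some (a (is ! k)) else None)"

definition indiscernible_over :: "('c, 'g::ab_group_add) hstruct \<Rightarrow> 'g option set
     \<Rightarrow> ('i::linorder) set \<Rightarrow> ('i \<Rightarrow> 'g) \<Rightarrow> bool" where
  "indiscernible_over H A S a = (\<forall>f is js. params f \<subseteq> A
      \<longrightarrow> sorted_wrt (<) is \<longrightarrow> sorted_wrt (<) js \<longrightarrow> length is = length js
      \<longrightarrow> set is \<subseteq> S \<longrightarrow> set js \<subseteq> S
      \<longrightarrow> (sat H (tup a is) f \<longleftrightarrow> sat H (tup a js) f))"

end

theory Submission
  imports Defs
begin

lemma ext_props:
  assumes "strict_total lt"
  shows ext_irr: "\<not> ext_lt lt x x"
    and ext_trans: "ext_lt lt x y \<Longrightarrow> ext_lt lt y z \<Longrightarrow> ext_lt lt x z"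
    and ext_total: "ext_lt lt x y \<or> x = y \<or> ext_lt lt y x"
proof -
  have i: "\<And>x. \<not> lt x x" and t: "\<And>x y z. lt x y \<Longrightarrow> lt y z \<Longrightarrow> lt x z"
    and o: "\<And>x y. lt x y \<or> x = y \<or> lt y x"
    using assms unfolding strict_total_def by blast+
  show "\<not> ext_lt lt x x" unfolding ext_lt_def using i by (auto split: option.splits)
  have "ext_lt lt x y \<longrightarrow> ext_lt lt y z \<longrightarrow> ext_lt lt x z"
    unfolding ext_lt_def by (auto split: option.splits intro: t)
  then show "ext_lt lt x y \<Longrightarrow> ext_lt lt y z \<Longrightarrow> ext_lt lt x z" by blast
  show "ext_lt lt x y \<or> x = y \<or> ext_lt lt y x"
    unfolding ext_lt_def using o by (auto split: option.splits)
qed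

lemma ext_le_lt_contra:
  assumes "strict_total lt" "ext_le lt x y" "ext_lt lt y x"
  shows False
proof -
  have "ext_lt lt x y \<or> x = y" using assms(2) unfolding ext_le_def .
  thus False using assms(3) ext_irr[OF assms(1), of x] ext_irr[OF assms(1), of y]
      ext_trans[OF assms(1), of x y x] by blast
qed

lemma ext_min_le_contra:
  assumes "strict_total lt" "ext_le lt (ext_min lt p q) r" "ext_lt lt r p" "ext_lt lt r q"
  shows False
proof -
  have "ext_le lt p r \<or> ext_le lt q r" using assms(2) unfolding ext_min_def
    by (cases "ext_le lt p q") simp_all
  thus False
  proof
    assume "ext_le lt p r"
    hence "ext_lt lt p r \<or> p = r" unfolding ext_le_def .
    thus False using assms(3) ext_irr[OF assms(1), of r] ext_trans[OF assms(1), of r p r] by blast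
  next
    assume "ext_le lt q r"
    hence "ext_lt lt q r \<or> q = r" unfolding ext_le_def .
    thus False using assms(4) ext_irr[OF assms(1), of r] ext_trans[OF assms(1), of r q r] by blast
  qed
qed

lemma smul_m1:
  assumes vs: "vector_space s"
  shows "s (-1) x = - x"
proof -
  have a: "\<And>p q y. s (p + q) y = s p y + s q y" and o: "\<And>y. s 1 y = y"
    using vs unfolding vector_space_def by blast+
  have "s 0 x = s 0 x + s 0 x" using a[of 0 0 x] by simp
  hence z: "s 0 x = 0" by simp
  have "s (-1) x + x = s 0 x" using a[of "-1" 1 x] o by simp
  thus ?thesis using z by (simp add: add_eq_0_iff2)
qed

lemma neg_val:
  assumes "hamel_space H"
  shows "val H (- x) = val H x"
proof -
  have vs: "vector_space (smul H)" using assms unfolding hamel_space_def by blast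
  have "smul H (-1) x = - x"
    by (rule smul_m1[OF vs])
  moreover have "val H (smul H (-1) x) = val H x"
    using assms unfolding hamel_space_def by simp
  ultimately show ?thesis by simp
qed

lemma val_strict:
  assumes H: "hamel_space H" and lt: "ext_lt (lt0 H) (val H y) (val H x)"
  shows "val H (x + y) = val H y"
proof -
  have st: "strict_total (lt0 H)" using H unfolding hamel_space_def ordered_vs_def by blast
  have um: "\<And>x y. ext_le (lt0 H) (ext_min (lt0 H) (val H x) (val H y)) (val H (x + y))"
    using H unfolding hamel_space_def by blast
  have "ext_min (lt0 H) (val H x) (val H y) = val H y"
    using lt ext_le_lt_contra[OF st, of "val H x" "val H y"] unfolding ext_min_def by auto
  hence le: "ext_le (lt0 H) (val H y) (val H (x + y))" using um[of x y] by simp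
  show ?thesis
  proof (rule ccontr)
    assume ne: "val H (x + y) \<noteq> val H y"
    hence l2: "ext_lt (lt0 H) (val H y) (val H (x + y))" using le unfolding ext_le_def by auto
    have "ext_le (lt0 H) (ext_min (lt0 H) (val H (x + y)) (val H (- x))) (val H (x + y + - x))"
      using um by blast
    hence "ext_le (lt0 H) (ext_min (lt0 H) (val H (x + y)) (val H x)) (val H y)"
      using neg_val[OF H, of x] by (simp add: algebra_simps)
    thus False using ext_min_le_contra[OF st] l2 lt by blast
  qed
qed

lemma lt1_facts:
  assumes H: "hamel_space H"
  shows lt1_add: "lt1 H x y \<Longrightarrow> lt1 H (x + z) (y + z)"
    and lt1_st: "strict_total (lt1 H)"
  using H unfolding hamel_space_def ordered_vs_def by blast+

lemma lt1_add_iff: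
  assumes H: "hamel_space H"
  shows "lt1 H (x + z) (y + z) \<longleftrightarrow> lt1 H x y"
proof
  assume "lt1 H (x + z) (y + z)"
  from lt1_add[OF H this, of "- z"] show "lt1 H x y" by simp
qed (rule lt1_add[OF H])

lemma sign_pos:
  assumes H: "hamel_space H" and v: "ext_lt (lt0 H) (val H d) (val H e)" and p: "lt1 H 0 d"
  shows "lt1 H 0 (d + e)"
proof (rule ccontr)
  assume n: "\<not> lt1 H 0 (d + e)"
  have st1: "strict_total (lt1 H)" by (rule lt1_st[OF H])
  have st0: "strict_total (lt0 H)" using H unfolding hamel_space_def ordered_vs_def by blast
  have "lt1 H 0 (d + e) \<or> 0 = d + e \<or> lt1 H (d + e) 0" using st1 unfolding strict_total_def by blast
  hence "d + e = 0 \<or> lt1 H (d + e) 0" using n by auto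
  thus False
  proof
    assume "d + e = 0"
    hence "- d = e" by (simp add: neg_eq_iff_add_eq_0)
    hence "e = - d" by simp
    hence "val H e = val H d" using neg_val[OF H] by simp
    thus False using v ext_irr[OF st0, of "val H d"] by simp
  next
    assume "lt1 H (d + e) 0"
    hence "lt1 H (d + e + - e) (0 + - e)" by (rule lt1_add[OF H])
    hence "lt1 H d (- e)" by simp
    hence "ext_le (lt0 H) (val H (- e)) (val H d)"
      using H p unfolding hamel_space_def by blast
    hence "ext_le (lt0 H) (val H e) (val H d)" using neg_val[OF H] by simp
    thus False using v ext_le_lt_contra[OF st0] by blast
  qed
qed

lemma sign_neg:
  assumes H: "hamel_space H" and v: "ext_lt (lt0 H) (val H d) (val H e)" and p: "lt1 H d 0"
  shows "lt1 H (d + e) 0"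
proof -
  have "lt1 H (d + - d) (0 + - d)" by (rule lt1_add[OF H p])
  hence p': "lt1 H 0 (- d)" by simp
  have "ext_lt (lt0 H) (val H (- d)) (val H (- e))" using v neg_val[OF H] by simp
  from sign_pos[OF H this p'] have "lt1 H 0 (- d + - e)" .
  hence "lt1 H (0 + (d + e)) (- d + - e + (d + e))" by (rule lt1_add[OF H])
  thus ?thesis by simp
qed

theorem lemma5p4:
  fixes H :: "('c::linordered_field, 'g::ab_group_add) hstruct"
    and a :: "'i::linorder \<Rightarrow> 'g" and c :: 'i and b :: 'g and b' :: "'g option"
  assumes "model_Tham H"
    and "infinite {i. i < c}" and "infinite {i. c < i}"
    and "\<exists>i j. a i \<noteq> a j"
    and "indiscernible_over H {} UNIV a"
    and "b' \<in> range (val H)"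
    and "indiscernible_over H {Some b, b'} (UNIV - {c}) a"
    and "\<forall>i. i \<noteq> c \<longrightarrow> val H (a i - b) = b'"
  shows "val H (a c - b) = b'"
proof -
  have H: "hamel_space H" using assms(1) unfolding model_Tham_def by blast
  have st0: "strict_total (lt0 H)" using H unfolding hamel_space_def ordered_vs_def by blast
  have st1: "strict_total (lt1 H)" by (rule lt1_st[OF H])
  obtain i where i: "i < c" using assms(2) not_finite_existsD by auto
  obtain j where j: "c < j" using assms(3) not_finite_existsD by auto
  have "{x. c < x \<and> x \<noteq> j} = {i. c < i} - {j}" by auto
  hence "infinite {x. c < x \<and> x \<noteq> j}" using assms(3) by simp
  then obtain k0 where k0: "c < k0" "k0 \<noteq> j" using not_finite_existsD[of "\<lambda>x. c < x \<and> x \<noteq> j"] by blast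
  define j1 where "j1 = min j k0"
  define k1 where "k1 = max j k0"
  have j1: "c < j1" and k1: "c < k1" and jk: "j1 < k1"
    using j k0 unfolding j1_def k1_def by (auto simp: min_def max_def)
  define U where "U = val H (a c - b)"
  have Wv: "\<And>l. l \<noteq> c \<Longrightarrow> val H (a l - b) = b'" using assms(8) by blast
  have ind0: "\<And>f is js. params f \<subseteq> {} \<Longrightarrow> sorted_wrt (<) is \<Longrightarrow> sorted_wrt (<) js
      \<Longrightarrow> length is = length js \<Longrightarrow> sat H (tup a is) f = sat H (tup a js) f"
    using assms(5) unfolding indiscernible_over_def by blast
  have ind1: "\<And>f is js. params f \<subseteq> {Some b, b'} \<Longrightarrow> sorted_wrt (<) is \<Longrightarrow> sorted_wrt (<) js
      \<Longrightarrow> length is = length js \<Longrightarrow> set is \<subseteq> UNIV - {c} \<Longrightarrow> set js \<subseteq> UNIV - {c}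
      \<Longrightarrow> sat H (tup a is) f = sat H (tup a js) f"
    using assms(7) unfolding indiscernible_over_def by blast
  show ?thesis
  proof (rule ccontr)
    assume ne: "val H (a c - b) \<noteq> b'"
    hence "ext_lt (lt0 H) U b' \<or> ext_lt (lt0 H) b' U"
      using ext_total[OF st0] unfolding U_def by blast
    thus False
    proof
      assume lt: "ext_lt (lt0 H) U b'"
      have e1: "val H (a i - a c) = U"
      proof -
        have v1: "val H (- (a c - b)) = U" unfolding U_def by (rule neg_val[OF H])
        have v2: "val H (a i - b) = b'" using Wv[of i] i by simp
        have "val H ((a i - b) + - (a c - b)) = val H (- (a c - b))"
          by (rule val_strict[OF H]) (use lt in \<open>simp only: v1 v2\<close>)
        moreover have "(a i - b) + - (a c - b) = a i - a c" by (simp add: algebra_simps)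
        ultimately show ?thesis using v1 by simp
      qed
      have e2: "val H (a c - a j1) = U"
      proof -
        have v1: "val H (- (a j1 - b)) = b'" using neg_val[OF H, of "a j1 - b"] Wv[of j1] j1 by (simp only:)
        have "val H (- (a j1 - b) + (a c - b)) = val H (a c - b)"
          by (rule val_strict[OF H]) (use lt in \<open>simp only: v1 U_def[symmetric]\<close>)
        moreover have "- (a j1 - b) + (a c - b) = a c - a j1" by (simp add: algebra_simps)
        ultimately show ?thesis unfolding U_def by simp
      qed
      have e3: "ext_le (lt0 H) b' (val H (a j1 - a k1))"
      proof -
        have "ext_le (lt0 H) (ext_min (lt0 H) (val H (a j1 - b)) (val H (- (a k1 - b))))
                (val H (a j1 - b + - (a k1 - b)))"
          using H unfolding hamel_space_def by blast
        moreover have w1: "val H (a j1 - b) = b'" using Wv[of j1] j1 by simp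
        moreover have w2: "val H (- (a k1 - b)) = b'" using neg_val[OF H, of "a k1 - b"] Wv[of k1] k1 by (simp only:)
        moreover have "a j1 - b + - (a k1 - b) = a j1 - a k1" by (simp add: algebra_simps)
        ultimately have "ext_le (lt0 H) (ext_min (lt0 H) b' b') (val H (a j1 - a k1))" by (simp only:)
        thus ?thesis by (simp add: ext_min_def ext_le_def)
      qed
      let ?f = "Eq (Vt (Plus (Var 0) (Scal (-1) (Var 1)))) (Vt (Plus (Var 1) (Scal (-1) (Var 2))))
                :: ('c, 'g) fml"
      have m1: "\<And>x. smul H (-1) x = - x"
      proof -
        fix x
        have vs: "vector_space (smul H)" using H unfolding hamel_space_def by blast
        show "smul H (-1) x = - x" by (rule smul_m1[OF vs])
      qed
      have "sat H (tup a [i, c, j1]) ?f = sat H (tup a [c, j1, k1]) ?f"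
        by (rule ind0) (use i j1 jk in auto)
      moreover have "sat H (tup a [i, c, j1]) ?f"
        using e1 e2 by (simp add: tup_def m1)
      ultimately have "val H (a c - a j1) = val H (a j1 - a k1)"
        by (simp add: tup_def m1)
      hence "ext_le (lt0 H) b' U" using e2 e3 by simp
      thus False using lt ext_le_lt_contra[OF st0] by blast
    next
      assume gt: "ext_lt (lt0 H) b' U"
      have dv: "\<And>l. l \<noteq> c \<Longrightarrow> val H (a l - a c) = b' \<and> ext_lt (lt0 H) (val H (a l - a c)) U
                    \<and> a l - b = (a l - a c) + (a c - b)"
      proof -
        fix l assume l: "l \<noteq> c"
        have v1: "val H (- (a c - b)) = U" unfolding U_def by (rule neg_val[OF H])
        have v2: "val H (a l - b) = b'" using Wv[OF l] by simp
        have "val H (- (a c - b) + (a l - b)) = val H (a l - b)"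
          by (rule val_strict[OF H]) (use gt in \<open>simp only: v1 v2\<close>)
        moreover have "- (a c - b) + (a l - b) = a l - a c" by (simp add: algebra_simps)
        ultimately have "val H (a l - a c) = b'" using v2 by simp
        thus "val H (a l - a c) = b' \<and> ext_lt (lt0 H) (val H (a l - a c)) U
                    \<and> a l - b = (a l - a c) + (a c - b)" using gt by simp
      qed
      have bnn: "b' \<noteq> None" using gt unfolding ext_lt_def by (auto split: option.splits)
      have vz0: "\<forall>x. (val H x = None) = (x = 0)" using H unfolding hamel_space_def by (elim conjE) assumption
      hence vz: "\<And>x. val H x = None \<longleftrightarrow> x = 0" by (rule spec)
      have nz: "\<And>l. l \<noteq> c \<Longrightarrow> a l \<noteq> a c"
      proof
        fix l assume l: "l \<noteq> c" and e: "a l = a c"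
        have "val H (a l - a c) = None" using e vz by simp
        thus False using dv[OF l] bnn by simp
      qed
      have pos: "\<And>l. l \<noteq> c \<Longrightarrow> lt1 H (a c) (a l) \<Longrightarrow> lt1 H b (a l)"
      proof -
        fix l assume l: "l \<noteq> c" and h: "lt1 H (a c) (a l)"
        have "lt1 H (a c + - a c) (a l + - a c)" by (rule lt1_add[OF H h])
        hence "lt1 H 0 (a l - a c)" by simp
        moreover have "ext_lt (lt0 H) (val H (a l - a c)) (val H (a c - b))"
          using dv[OF l] unfolding U_def by blast
        ultimately have "lt1 H 0 (a l - a c + (a c - b))" using sign_pos[OF H] by blast
        moreover have "a l - a c + (a c - b) = a l - b" by (simp add: algebra_simps)
        ultimately have "lt1 H 0 (a l - b)" by simp
        hence "lt1 H (0 + b) (a l - b + b)" by (rule lt1_add[OF H])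
        thus "lt1 H b (a l)" by simp
      qed
      have neg: "\<And>l. l \<noteq> c \<Longrightarrow> lt1 H (a l) (a c) \<Longrightarrow> lt1 H (a l) b"
      proof -
        fix l assume l: "l \<noteq> c" and h: "lt1 H (a l) (a c)"
        have "lt1 H (a l + - a c) (a c + - a c)" by (rule lt1_add[OF H h])
        hence "lt1 H (a l - a c) 0" by simp
        moreover have "ext_lt (lt0 H) (val H (a l - a c)) (val H (a c - b))"
          using dv[OF l] unfolding U_def by blast
        ultimately have "lt1 H (a l - a c + (a c - b)) 0" using sign_neg[OF H] by blast
        moreover have "a l - a c + (a c - b) = a l - b" by (simp add: algebra_simps)
        ultimately have "lt1 H (a l - b) 0" by simp
        hence "lt1 H (a l - b + b) (0 + b)" by (rule lt1_add[OF H])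
        thus "lt1 H (a l) b" by simp
      qed
      let ?g = "Less1 (Var 0) (Var 1) :: ('c, 'g) fml"
      have "sat H (tup a [i, c]) ?g = sat H (tup a [c, j]) ?g"
        by (rule ind0) (use i j in auto)
      hence o1: "lt1 H (a i) (a c) = lt1 H (a c) (a j)" by (simp add: tup_def ext_lt_def)
      let ?h = "Less1 (Var 0) (Par (Some b)) :: ('c, 'g) fml"
      have "sat H (tup a [i]) ?h = sat H (tup a [j]) ?h"
        by (rule ind1) (use i j in auto)
      hence o2: "lt1 H (a i) b = lt1 H (a j) b" by (simp add: tup_def ext_lt_def)
      have ic: "i \<noteq> c" and jc: "j \<noteq> c" using i j by auto
      have tot: "\<And>x y. lt1 H x y \<or> x = y \<or> lt1 H y x"
        and irr: "\<And>x. \<not> lt1 H x x"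
        and tr: "\<And>x y z. lt1 H x y \<Longrightarrow> lt1 H y z \<Longrightarrow> lt1 H x z"
        using st1 unfolding strict_total_def by blast+
      show False
      proof (cases "lt1 H (a i) (a c)")
        case True
        hence "lt1 H (a i) b" "lt1 H b (a j)" using neg[OF ic] pos[OF jc] o1 by auto
        thus False using o2 irr tr by blast
      next
        case False
        hence "lt1 H (a c) (a i)" "lt1 H (a j) (a c)" using tot nz[OF ic] nz[OF jc] o1 by blast+
        hence "lt1 H b (a i)" "lt1 H (a j) b" using neg[OF jc] pos[OF ic] by auto
        thus False using o2 irr tr by blast
      qed
    qed
  qed
qed

end
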